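(* Let $X_1,X_2,\dots$ be iid real random variables with common continuous distribution function $F$. Then for all integers $1\le j<k$ and all $y_1,y_2\in\mathbb{R}$, \[ \Pr(X_j\le y_1,X_k\le y_2\mid X_j\text{ and }X_k\text{ are records}) =\begin{cases} \frac{F^j(y_1)}{k-j}\left(kF^{k-j}(y_2)-jF^{k-j}(y_1)\right), & \text{if } F(y_1)<F(y_2),\\[2pt] F^k(y_2)=\Pr(X_k\le y_2\mid X_k\text{ is a record}), & \text{if } F(y_2)\le F(y_1). \end{cases} \]
   Context: $X_m$ is a record if $X_m>\max(X_1,\dots,X_{m-1})$; $X_1$ is always a record. *)

theory Defs
  imports "HOL-Probability.Probability"
begin

text \<open>Sequence indexed from 1. X m is a record at outcome w if m \<ge> 1 and
  X m w > max(X 1 w, ..., X (m-1) w); X 1 is always a record.\<close>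
definition is_record :: "(nat \<Rightarrow> 'a \<Rightarrow> real) \<Rightarrow> nat \<Rightarrow> 'a \<Rightarrow> bool" where
  "is_record X m w \<longleftrightarrow> 1 \<le> m \<and> (\<forall>i\<in>{1..<m}. X i w < X m w)"

end

theory Submission
  imports Defs
begin

definition U01 :: "real measure" where "U01 = density lborel (indicator {0..1})"

lemma U01_emeasure_atMost:
  "emeasure U01 {..t} = ennreal (max 0 (min 1 t))"
proof -
  have "emeasure U01 {..t} = (\<integral>\<^sup>+ x. indicator {0..1} x * indicator {..t} x \<partial>lborel)"
    unfolding U01_def by (subst emeasure_density) auto
  also have "\<dots> = (\<integral>\<^sup>+ x. indicator ({0..1} \<inter> {..t}) x \<partial>lborel)"
    by (intro nn_integral_cong) (auto split: split_indicator)
  also have "\<dots> = emeasure lborel ({0..1} \<inter> {..t})" by simp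
  also have "{0..1} \<inter> {..t} = {0..min 1 t}" by auto
  also have "emeasure lborel {0..min 1 t} = ennreal (max 0 (min 1 t))"
    by (cases "0 \<le> min 1 t") (auto simp: max_def)
  finally show ?thesis .
qed

lemma U01_prob: "real_distribution U01"
proof -
  have "emeasure U01 UNIV = (\<integral>\<^sup>+ x. indicator {0..1} (x::real) * indicator UNIV x \<partial>lborel)"
    unfolding U01_def by (subst emeasure_density) auto
  also have "\<dots> = (\<integral>\<^sup>+ x. indicator {0..1} (x::real) \<partial>lborel)" by simp
  also have "\<dots> = emeasure lborel {0..1::real}" by (rule nn_integral_indicator) simp
  also have "\<dots> = 1" by simp
  finally have "emeasure U01 (space U01) = 1" by (simp add: U01_def)
  then show ?thesis
    unfolding real_distribution_def
    by (auto intro!: prob_spaceI simp: U01_def real_distribution_axioms_def)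
qed


lemma level_measure:
  fixes \<mu> :: "real measure"
  assumes rd: "real_distribution \<mu>" and cont: "continuous_on UNIV (cdf \<mu>)"
  shows "measure \<mu> {u. cdf \<mu> u \<le> t} = max 0 (min 1 t)"
proof -
  interpret real_distribution \<mu> by fact
  let ?F = "cdf \<mu>"
  let ?S = "{u. ?F u \<le> t}"
  have mono: "\<And>x y. x \<le> y \<Longrightarrow> ?F x \<le> ?F y" by (rule cdf_nondecreasing)
  show ?thesis
  proof (cases "t < 0")
    case True
    then have "?S = {}" using cdf_nonneg[of x for x] by (smt (verit) empty_Collect_eq)
    then show ?thesis using True by simp
  next
    case t0: False
    show ?thesis
    proof (cases "t \<ge> 1")
      case True
      then have "?S = UNIV" using cdf_bounded_prob by (auto intro: order.trans)
      then show ?thesis using True prob_space by simp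
    next
      case t1: False
      show ?thesis
      proof (cases "?S = {}")
        case True
        have "t = 0"
        proof (rule ccontr)
          assume "t \<noteq> 0"
          then have "t > 0" using t0 by simp
          have "eventually (\<lambda>x. ?F x < t) at_bot"
            using cdf_lim_at_bot \<open>t > 0\<close> by (rule order_tendstoD)
          then obtain x where "?F x < t" by (metis eventually_at_bot_linorder order_refl)
          then have "x \<in> ?S" by simp
          then show False using True by simp
        qed
        then show ?thesis using True by simp
      next
        case ne: False
        have "eventually (\<lambda>x. ?F x > t) at_top"
          using cdf_lim_at_top_prob t1 by (intro order_tendstoD) auto
        then obtain b where b: "?F b > t" by (metis eventually_at_top_linorder order_refl)
        have bdd: "bdd_above ?S"
        proof (rule bdd_aboveI[of _ b])
          fix x assume xS: "x \<in> ?S"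
          show "x \<le> b"
          proof (rule ccontr)
            assume "\<not> x \<le> b"
            then have "?F b \<le> ?F x" by (intro mono) simp
            then show False using b xS by simp
          qed
        qed
        have cl: "closed ?S"
          by (rule closed_Collect_le) (use cont in \<open>auto intro: continuous_on_const\<close>)
        define s where "s = Sup ?S"
        have sS: "s \<in> ?S" unfolding s_def by (rule closed_contains_Sup[OF ne bdd cl])
        have Seq: "?S = {..s}"
        proof
          show "?S \<subseteq> {..s}" unfolding s_def using bdd by (auto intro: cSup_upper)
          show "{..s} \<subseteq> ?S" using sS mono by (auto intro: order.trans)
        qed
        from ne obtain a where a: "?F a \<le> t" by auto
        have ab: "a \<le> b"
        proof (rule ccontr)
          assume "\<not> a \<le> b"
          then have "?F b \<le> ?F a" by (intro mono) simp
          then show False using a b by simp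
        qed
        obtain x where x: "a \<le> x" "x \<le> b" "?F x = t"
          using IVT'[of ?F a t b] a b ab cont by (auto intro: continuous_on_subset)
        have "x \<le> s" using x Seq by auto
        then have "?F s = t" using mono[of x s] x sS by auto
        then have "measure \<mu> ?S = t" using Seq cdf_def2[of \<mu> s] by simp
        then show ?thesis using t0 t1 by simp
      qed
    qed
  qed
qed

lemma distr_cdf_U01:
  fixes \<mu> :: "real measure"
  assumes rd: "real_distribution \<mu>" and cont: "continuous_on UNIV (cdf \<mu>)"
  shows "distr \<mu> borel (cdf \<mu>) = U01"
proof -
  interpret real_distribution \<mu> by fact
  have Fm: "cdf \<mu> \<in> borel_measurable borel"
    by (rule borel_measurable_continuous_onI[OF cont])
  then have Fm': "cdf \<mu> \<in> borel_measurable \<mu>" by simp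
  show ?thesis
  proof (rule cdf_unique)
    show "real_distribution (distr \<mu> borel (cdf \<mu>))"
      using Fm' by (rule real_distribution_distr)
    show "real_distribution U01" by (rule U01_prob)
    show "cdf (distr \<mu> borel (cdf \<mu>)) = cdf U01"
    proof
      fix t
      have "cdf (distr \<mu> borel (cdf \<mu>)) t = measure \<mu> (cdf \<mu> -` {..t} \<inter> space \<mu>)"
        unfolding cdf_def[of "distr \<mu> borel (cdf \<mu>)"] using Fm' by (subst measure_distr) auto
      also have "\<dots> = measure \<mu> {u. cdf \<mu> u \<le> t}" by (intro arg_cong[where f="measure \<mu>"]) auto
      also have "\<dots> = max 0 (min 1 t)" by (rule level_measure[OF rd cont])
      also have "\<dots> = cdf U01 t"
        unfolding cdf_def measure_def U01_emeasure_atMost by (simp add: max_def)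
      finally show "cdf (distr \<mu> borel (cdf \<mu>)) t = cdf U01 t" .
    qed
  qed
qed


lemma pow_int:
  assumes "0 \<le> (a::real)"
  shows "(\<integral>\<^sup>+ t. ennreal (t ^ m) * indicator {0..a} t \<partial>lborel) = ennreal (a ^ Suc m / Suc m)"
proof -
  have "((\<lambda>t. t ^ m) has_integral (a ^ Suc m / Suc m - 0 ^ Suc m / Suc m)) {0..a}"
  proof (rule fundamental_theorem_of_calculus[OF assms])
    fix x :: real assume "x \<in> {0..a}"
    show "((\<lambda>t. t ^ Suc m / Suc m) has_vector_derivative x ^ m) (at x within {0..a})"
      unfolding has_real_derivative_iff_has_vector_derivative[symmetric]
      apply (auto intro!: derivative_eq_intros simp del: of_nat_Suc)
      apply (cases m)
       apply (auto simp: field_simps)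
      done
  qed
  then have "((\<lambda>t. t ^ m) has_integral (a ^ Suc m / Suc m)) {0..a}" by simp
  from nn_integral_has_integral_lebesgue'[OF _ this] show ?thesis by auto
qed

lemma U01_null: "emeasure U01 {c} = 0"
proof -
  have "emeasure U01 {c} = (\<integral>\<^sup>+ x. indicator {0..1} x * indicator {c} (x::real) \<partial>lborel)"
    unfolding U01_def by (rule emeasure_density) auto
  also have "\<dots> \<le> (\<integral>\<^sup>+ x. indicator {c} (x::real) \<partial>lborel)"
    by (intro nn_integral_mono) (auto split: split_indicator)
  also have "\<dots> = 0" by simp
  finally show ?thesis by simp
qed

locale cdist =
  fixes \<mu> :: "real measure"
  assumes rd: "real_distribution \<mu>" and cont: "continuous_on UNIV (cdf \<mu>)"
begin

abbreviation "F \<equiv> cdf \<mu>"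

lemma Fm[measurable]: "F \<in> borel_measurable borel"
  by (rule borel_measurable_continuous_onI[OF cont])

lemma sets_mu[simp, measurable_cong]: "sets \<mu> = sets borel"
  using rd by (simp add: real_distribution_def real_distribution_axioms_def)

lemma space_mu[simp]: "space \<mu> = UNIV"
  using sets_mu sets_eq_imp_space_eq by fastforce

lemma F_mono: "x \<le> y \<Longrightarrow> F x \<le> F y"
  using rd real_distribution.finite_borel_measure_M finite_borel_measure.cdf_nondecreasing by blast

lemma F_01: "0 \<le> F x" "F x \<le> 1"
  using rd real_distribution.finite_borel_measure_M finite_borel_measure.cdf_nonneg
    real_distribution.cdf_bounded_prob by blast+

lemma distr_F: "distr \<mu> borel F = U01"
  by (rule distr_cdf_U01[OF rd cont])

lemma level_null: "emeasure \<mu> {u. F u = c} = 0"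
proof -
  have "emeasure \<mu> {u. F u = c} = emeasure (distr \<mu> borel F) {c}"
    by (subst emeasure_distr) (auto intro!: arg_cong[where f="emeasure \<mu>"])
  also have "\<dots> = 0" unfolding distr_F by (rule U01_null)
  finally show ?thesis .
qed

lemma AE_neq: "AE u in \<mu>. F u \<noteq> c"
  by (rule AE_I'[of "{u. F u = c}"]) (auto simp: level_null)

lemma transform:
  assumes [measurable]: "h \<in> borel_measurable borel"
  shows "(\<integral>\<^sup>+ u. h (F u) \<partial>\<mu>) = (\<integral>\<^sup>+ t. indicator {0..1} t * h t \<partial>lborel)"
proof -
  have "(\<integral>\<^sup>+ u. h (F u) \<partial>\<mu>) = (\<integral>\<^sup>+ t. h t \<partial>distr \<mu> borel F)"
    by (subst nn_integral_distr) auto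
  also have "\<dots> = (\<integral>\<^sup>+ t. indicator {0..1} t * h t \<partial>lborel)"
    unfolding distr_F U01_def by (subst nn_integral_density) auto
  finally show ?thesis .
qed

lemma L_le: "(\<integral>\<^sup>+ u. indicator {..c} u * ennreal (F u ^ m) \<partial>\<mu>) = ennreal (F c ^ Suc m / Suc m)"
proof -
  have "(\<integral>\<^sup>+ u. indicator {..c} u * ennreal (F u ^ m) \<partial>\<mu>) =
        (\<integral>\<^sup>+ u. indicator {..F c} (F u) * ennreal (F u ^ m) \<partial>\<mu>)"
  proof (rule nn_integral_cong_AE)
    show "AE u in \<mu>. indicator {..c} u * ennreal (F u ^ m) = indicator {..F c} (F u) * ennreal (F u ^ m)"
      using AE_neq[of "F c"]
    proof eventually_elim
      case (elim u)
      have "u \<le> c \<longleftrightarrow> F u \<le> F c"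
        using F_mono[of u c] F_mono[of c u] elim by (cases "u \<le> c") auto
      then show ?case by (auto split: split_indicator)
    qed
  qed
  also have "\<dots> = (\<integral>\<^sup>+ t. indicator {0..1} t * (indicator {..F c} t * ennreal (t ^ m)) \<partial>lborel)"
    by (rule transform) auto
  also have "\<dots> = (\<integral>\<^sup>+ t. ennreal (t ^ m) * indicator {0..F c} t \<partial>lborel)"
    using F_01[of c] by (intro nn_integral_cong) (auto split: split_indicator)
  also have "\<dots> = ennreal (F c ^ Suc m / Suc m)"
    by (rule pow_int) (rule F_01)
  finally show ?thesis .
qed

lemma L_less: "(\<integral>\<^sup>+ u. indicator {..<c} u * ennreal (F u ^ m) \<partial>\<mu>) = ennreal (F c ^ Suc m / Suc m)"
proof -
  have "(\<integral>\<^sup>+ u. indicator {..<c} u * ennreal (F u ^ m) \<partial>\<mu>) =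
        (\<integral>\<^sup>+ u. indicator {..c} u * ennreal (F u ^ m) \<partial>\<mu>)"
  proof (rule nn_integral_cong_AE)
    show "AE u in \<mu>. indicator {..<c} u * ennreal (F u ^ m) = indicator {..c} u * ennreal (F u ^ m)"
      using AE_neq[of "F c"]
      by eventually_elim (auto split: split_indicator)
  qed
  then show ?thesis using L_le by simp
qed

lemma L_all: "(\<integral>\<^sup>+ u. ennreal (F u ^ m) \<partial>\<mu>) = ennreal (1 / Suc m)"
proof -
  have "(\<integral>\<^sup>+ u. ennreal (F u ^ m) \<partial>\<mu>) = (\<integral>\<^sup>+ t. indicator {0..1} t * ennreal (t ^ m) \<partial>lborel)"
    by (rule transform) auto
  also have "\<dots> = (\<integral>\<^sup>+ t. ennreal (t ^ m) * indicator {0..1} t \<partial>lborel)"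
    by (simp add: mult.commute)
  also have "\<dots> = ennreal (1 / Suc m)" using pow_int[of 1 m] by simp
  finally show ?thesis .
qed

lemma emeasure_less: "emeasure \<mu> {..<c} = ennreal (F c)"
proof -
  have "emeasure \<mu> {..<c} = (\<integral>\<^sup>+ u. indicator {..<c} u * ennreal (F u ^ 0) \<partial>\<mu>)"
    by (simp add: nn_integral_indicator)
  then show ?thesis using L_less[of c 0] by simp
qed

end


context cdist
begin

lemma prob_mu: "prob_space \<mu>" using rd by (simp add: real_distribution_def)

lemma meas_cmp: "i \<in> I \<Longrightarrow> l \<in> I \<Longrightarrow>
   (\<lambda>x. if x i < x l then 1 else 0 :: ennreal) \<in> borel_measurable (PiM I (\<lambda>_. \<mu>))"
  by measurable

lemma meas_mem:
  assumes "i \<in> I" and [measurable]: "A \<in> sets borel"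
  shows "(\<lambda>x. if x i \<in> A then 1 else 0 :: ennreal) \<in> borel_measurable (PiM I (\<lambda>_. \<mu>))"
  using assms(1) by measurable

lemma prod_ind: "finite S \<Longrightarrow> (\<Prod>i\<in>S. (if P i then 1 else 0::ennreal)) = (if \<forall>i\<in>S. P i then 1 else 0)"
  by (induction S rule: finite_induct) auto

lemma pi_red:
  fixes j k :: nat and A1 A2 :: "real set"
  assumes jk: "1 \<le> j" "j < k" and A[measurable]: "A1 \<in> sets borel" "A2 \<in> sets borel"
  shows "emeasure (PiM {1..k} (\<lambda>_. \<mu>))
      {x \<in> space (PiM {1..k} (\<lambda>_. \<mu>)). x j \<in> A1 \<and> x k \<in> A2 \<and>
         (\<forall>i\<in>{1..<j}. x i < x j) \<and> (\<forall>i\<in>{1..<k}. x i < x k)}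
    = (\<integral>\<^sup>+ v. \<integral>\<^sup>+ u. indicator A1 u * indicator A2 v * indicator {..<v} u *
          ennreal (F u ^ (j - 1)) * ennreal (F v ^ (k - j - 1)) \<partial>\<mu> \<partial>\<mu>)"
proof -
  interpret ps: product_sigma_finite "\<lambda>_::nat. \<mu>"
    unfolding product_sigma_finite_def using prob_mu prob_space_imp_sigma_finite by blast
  define I' where "I' = {1..<j} \<union> {j<..<k}"
  have I'fin: "finite I'" unfolding I'_def by auto
  have jI': "j \<notin> I'" and kI': "k \<notin> I'" and kjI': "k \<notin> insert j I'" unfolding I'_def using jk by auto
  have Ieq: "{1..k} = insert k (insert j I')" unfolding I'_def using jk by auto
  have dis: "{1..<j} \<inter> {j<..<k} = {}" by auto
  define ind :: "bool \<Rightarrow> ennreal" where "ind b = (if b then 1 else 0)" for b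
  have ind_meas[measurable]: "ind \<in> measurable (count_space UNIV) borel" by simp
  define f :: "(nat \<Rightarrow> real) \<Rightarrow> ennreal" where
    "f x = ind (x j \<in> A1) * ind (x k \<in> A2) * ind (x j < x k) *
       (\<Prod>i\<in>{1..<j}. ind (x i < x j)) * (\<Prod>i\<in>{j<..<k}. ind (x i < x k))" for x
  let ?P = "PiM {1..k} (\<lambda>_. \<mu>)"
  have fm: "f \<in> borel_measurable ?P"
    unfolding f_def ind_def using jk
    by (intro borel_measurable_times_ennreal borel_measurable_prod_ennreal meas_cmp meas_mem) auto
  have "emeasure ?P {x \<in> space ?P. x j \<in> A1 \<and> x k \<in> A2 \<and>
         (\<forall>i\<in>{1..<j}. x i < x j) \<and> (\<forall>i\<in>{1..<k}. x i < x k)} = integral\<^sup>N ?P f"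
  proof -
    have "emeasure ?P {x \<in> space ?P. x j \<in> A1 \<and> x k \<in> A2 \<and>
         (\<forall>i\<in>{1..<j}. x i < x j) \<and> (\<forall>i\<in>{1..<k}. x i < x k)} =
         integral\<^sup>N ?P (indicator {x \<in> space ?P. x j \<in> A1 \<and> x k \<in> A2 \<and>
         (\<forall>i\<in>{1..<j}. x i < x j) \<and> (\<forall>i\<in>{1..<k}. x i < x k)})"
      using jk by (intro nn_integral_indicator[symmetric]) measurable
    also have "\<dots> = integral\<^sup>N ?P f"
    proof (intro nn_integral_cong)
      fix x
      have eqv: "(x j \<in> A1 \<and> x k \<in> A2 \<and> (\<forall>i\<in>{1..<j}. x i < x j) \<and> (\<forall>i\<in>{1..<k}. x i < x k))
        \<longleftrightarrow> (x j \<in> A1 \<and> x k \<in> A2 \<and> x j < x k \<and> (\<forall>i\<in>{1..<j}. x i < x j) \<and> (\<forall>i\<in>{j<..<k}. x i < x k))"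
        using jk by (auto) (metis atLeastLessThan_iff greaterThanLessThan_iff less_trans linorder_neqE_nat)
      have p1: "(\<Prod>i\<in>{1..<j}. ind (x i < x j)) = ind (\<forall>i\<in>{1..<j}. x i < x j)"
        unfolding ind_def by (rule prod_ind) auto
      have p2: "(\<Prod>i\<in>{j<..<k}. ind (x i < x k)) = ind (\<forall>i\<in>{j<..<k}. x i < x k)"
        unfolding ind_def by (rule prod_ind) auto
      assume "x \<in> space ?P"
      show "indicator {x \<in> space ?P. x j \<in> A1 \<and> x k \<in> A2 \<and>
         (\<forall>i\<in>{1..<j}. x i < x j) \<and> (\<forall>i\<in>{1..<k}. x i < x k)} x = f x"
        unfolding f_def p1 p2 using \<open>x \<in> space ?P\<close> eqv by (auto simp: ind_def indicator_def)
    qed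
    finally show ?thesis .
  qed
  also have "integral\<^sup>N ?P f = (\<integral>\<^sup>+ v. \<integral>\<^sup>+ x. f (x(k := v)) \<partial>PiM (insert j I') (\<lambda>_. \<mu>) \<partial>\<mu>)"
  proof -
    have fmk: "f \<in> borel_measurable (PiM (insert k (insert j I')) (\<lambda>_. \<mu>))" using fm by (simp only: Ieq)
    show ?thesis unfolding Ieq using ps.product_nn_integral_insert_rev[OF _ kjI' fmk] I'fin by simp
  qed
  also have "\<dots> = (\<integral>\<^sup>+ v. \<integral>\<^sup>+ u. \<integral>\<^sup>+ x. f (x(j := u, k := v)) \<partial>PiM I' (\<lambda>_. \<mu>) \<partial>\<mu> \<partial>\<mu>)"
  proof (intro nn_integral_cong)
    fix v
    have "(\<lambda>x. x(k := v)) \<in> PiM (insert j I') (\<lambda>_. \<mu>) \<rightarrow>\<^sub>M PiM (insert k (insert j I')) (\<lambda>_. \<mu>)"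
      by measurable
    then have "(\<lambda>x. f (x(k := v))) \<in> borel_measurable (PiM (insert j I') (\<lambda>_. \<mu>))"
      using fm Ieq by (intro measurable_compose[where f="\<lambda>x. x(k := v)" and g=f]) auto
    then show "(\<integral>\<^sup>+ x. f (x(k := v)) \<partial>PiM (insert j I') (\<lambda>_. \<mu>)) =
       (\<integral>\<^sup>+ u. \<integral>\<^sup>+ x. f (x(j := u, k := v)) \<partial>PiM I' (\<lambda>_. \<mu>) \<partial>\<mu>)"
      by (subst ps.product_nn_integral_insert_rev) (auto simp: I'fin jI')
  qed
  also have "\<dots> = (\<integral>\<^sup>+ v. \<integral>\<^sup>+ u. indicator A1 u * indicator A2 v * indicator {..<v} u *
          ennreal (F u ^ (j - 1)) * ennreal (F v ^ (k - j - 1)) \<partial>\<mu> \<partial>\<mu>)"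
  proof (intro nn_integral_cong)
    fix u v :: real
    define g :: "nat \<Rightarrow> real \<Rightarrow> ennreal" where "g i t = (if i < j then ind (t < u) else ind (t < v))" for i t
    have gm': "g i \<in> borel_measurable borel" for i unfolding g_def ind_def by measurable
    have gm: "g i \<in> borel_measurable \<mu>" for i unfolding g_def ind_def by measurable
    have gmp: "(\<lambda>x. \<Prod>i\<in>I'. g i (x i)) \<in> borel_measurable (PiM I' (\<lambda>_. \<mu>))"
    proof (intro borel_measurable_prod_ennreal)
      fix i assume "i \<in> I'"
      then show "(\<lambda>x. g i (x i)) \<in> borel_measurable (PiM I' (\<lambda>_. \<mu>))"
        using gm' by measurable
    qed
    define c where "c = ind (u \<in> A1) * ind (v \<in> A2) * ind (u < v)"
    have split: "(\<Prod>i\<in>I'. G i) = (\<Prod>i\<in>{1..<j}. G i) * (\<Prod>i\<in>{j<..<k}. G i)" for G :: "nat \<Rightarrow> ennreal"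
      unfolding I'_def by (rule prod.union_disjoint) (auto)
    have fx: "f (x(j := u, k := v)) = c * (\<Prod>i\<in>I'. g i (x i))" for x
    proof -
      have "(\<Prod>i\<in>{1..<j}. ind ((x(j := u, k := v)) i < (x(j := u, k := v)) j)) = (\<Prod>i\<in>{1..<j}. g i (x i))"
        using jk by (intro prod.cong) (auto simp: g_def)
      moreover have "(\<Prod>i\<in>{j<..<k}. ind ((x(j := u, k := v)) i < (x(j := u, k := v)) k)) = (\<Prod>i\<in>{j<..<k}. g i (x i))"
        using jk by (intro prod.cong) (auto simp: g_def)
      ultimately show ?thesis unfolding f_def c_def split using jk by (simp add: mult.assoc)
    qed
    have ig: "(\<Prod>i\<in>I'. integral\<^sup>N \<mu> (g i)) = ennreal (F u ^ (j - 1)) * ennreal (F v ^ (k - j - 1))"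
    proof -
      have "(\<Prod>i\<in>{1..<j}. integral\<^sup>N \<mu> (g i)) = (\<Prod>i\<in>{1..<j}. ennreal (F u))"
      proof (intro prod.cong refl)
        fix i assume "i \<in> {1..<j}"
        then have "integral\<^sup>N \<mu> (g i) = integral\<^sup>N \<mu> (indicator {..<u})"
          by (intro nn_integral_cong) (auto simp: g_def ind_def)
        also have "\<dots> = ennreal (F u)" using emeasure_less by simp
        finally show "integral\<^sup>N \<mu> (g i) = ennreal (F u)" .
      qed
      moreover have "(\<Prod>i\<in>{j<..<k}. integral\<^sup>N \<mu> (g i)) = (\<Prod>i\<in>{j<..<k}. ennreal (F v))"
      proof (intro prod.cong refl)
        fix i assume "i \<in> {j<..<k}"
        then have "integral\<^sup>N \<mu> (g i) = integral\<^sup>N \<mu> (indicator {..<v})"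
          by (intro nn_integral_cong) (auto simp: g_def ind_def)
        also have "\<dots> = ennreal (F v)" using emeasure_less by simp
        finally show "integral\<^sup>N \<mu> (g i) = ennreal (F v)" .
      qed
      ultimately show ?thesis unfolding split using F_01
        by (simp add: ennreal_power)
    qed
    have "(\<integral>\<^sup>+ x. f (x(j := u, k := v)) \<partial>PiM I' (\<lambda>_. \<mu>)) = (\<integral>\<^sup>+ x. c * (\<Prod>i\<in>I'. g i (x i)) \<partial>PiM I' (\<lambda>_. \<mu>))"
      by (simp add: fx)
    also have "\<dots> = c * (\<integral>\<^sup>+ x. (\<Prod>i\<in>I'. g i (x i)) \<partial>PiM I' (\<lambda>_. \<mu>))"
      using gmp by (intro nn_integral_cmult) auto
    also have "\<dots> = c * (\<Prod>i\<in>I'. integral\<^sup>N \<mu> (g i))"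
      using gm I'fin by (subst ps.product_nn_integral_prod) auto
    also have "\<dots> = indicator A1 u * indicator A2 v * indicator {..<v} u *
          ennreal (F u ^ (j - 1)) * ennreal (F v ^ (k - j - 1))"
      unfolding ig c_def ind_def by (simp add: indicator_def mult.assoc)
    finally show "(\<integral>\<^sup>+ x. f (x(j := u, k := v)) \<partial>PiM I' (\<lambda>_. \<mu>)) = \<dots>" .
  qed
  finally show ?thesis .
qed

end


lemma red_M:
  fixes M :: "'a measure" and X :: "nat \<Rightarrow> 'a \<Rightarrow> real" and j k :: nat and A1 A2 :: "real set"
  assumes PS: "prob_space M"
    and meas: "\<And>i. i \<ge> 1 \<Longrightarrow> X i \<in> borel_measurable M"
    and ind: "prob_space.indep_vars M (\<lambda>_. borel) X {1..}"
    and dst: "\<And>i. i \<ge> 1 \<Longrightarrow> distr M borel (X i) = distr M borel (X 1)"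
    and jk: "1 \<le> j" "j < k" and A[measurable]: "A1 \<in> sets borel" "A2 \<in> sets borel"
  shows "emeasure M {w \<in> space M. X j w \<in> A1 \<and> X k w \<in> A2 \<and> is_record X j w \<and> is_record X k w}
    = emeasure (PiM {1..k} (\<lambda>_. distr M borel (X 1)))
      {x \<in> space (PiM {1..k} (\<lambda>_. distr M borel (X 1))). x j \<in> A1 \<and> x k \<in> A2 \<and>
         (\<forall>i\<in>{1..<j}. x i < x j) \<and> (\<forall>i\<in>{1..<k}. x i < x k)}"
proof -
  interpret prob_space M by fact
  define I where "I = {1..k}"
  have Ine: "I \<noteq> {}" unfolding I_def using jk by auto
  have indI: "indep_vars (\<lambda>_. borel) X I"
    by (rule indep_vars_subset[OF ind]) (auto simp: I_def)
  have D: "distr M (PiM I (\<lambda>_. borel)) (\<lambda>w. \<lambda>i\<in>I. X i w) = PiM I (\<lambda>i. distr M borel (X i))"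
  proof -
    have rv: "\<And>i. i \<in> I \<Longrightarrow> random_variable borel (X i)" using meas by (auto simp: I_def)
    show ?thesis using iffD1[OF indep_vars_iff_distr_eq_PiM'[OF Ine rv] indI] .
  qed
  also have "\<dots> = PiM I (\<lambda>_. distr M borel (X 1))"
  proof (rule PiM_cong)
    fix i assume "i \<in> I"
    then have "i \<ge> 1" by (simp add: I_def)
    then show "distr M borel (X i) = distr M borel (X 1)" by (rule dst)
  qed simp
  finally have D': "distr M (PiM I (\<lambda>_. borel)) (\<lambda>w. \<lambda>i\<in>I. X i w) = PiM I (\<lambda>_. distr M borel (X 1))" .
  have Vm: "(\<lambda>w. \<lambda>i\<in>I. X i w) \<in> M \<rightarrow>\<^sub>M PiM I (\<lambda>_. borel)"
    by (rule measurable_restrict) (auto simp: I_def meas)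
  have jI: "j \<in> I" and kI: "k \<in> I" unfolding I_def using jk by auto
  define S where "S = {x \<in> space (PiM I (\<lambda>_. borel)). x j \<in> A1 \<and> x k \<in> A2 \<and>
         (\<forall>i\<in>{1..<j}. x i < x j) \<and> (\<forall>i\<in>{1..<k}. x i < x k)}"
  have Sm: "S \<in> sets (PiM I (\<lambda>_. borel))"
  proof -
    have sub1: "{1..<j} \<subseteq> I" "{1..<k} \<subseteq> I" unfolding I_def using jk by auto
    have [measurable]: "i \<in> {1..<j} \<Longrightarrow> i \<in> I" "i \<in> {1..<k} \<Longrightarrow> i \<in> I" for i using sub1 by auto
    show ?thesis unfolding S_def using jI kI by measurable
  qed
  have sp: "space (PiM I (\<lambda>_. distr M borel (X 1))) = space (PiM I (\<lambda>_. borel))"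
    by (simp add: space_PiM)
  have "emeasure (PiM I (\<lambda>_. distr M borel (X 1))) S = emeasure M ((\<lambda>w. \<lambda>i\<in>I. X i w) -` S \<inter> space M)"
    unfolding D'[symmetric] by (rule emeasure_distr[OF Vm Sm])
  also have "(\<lambda>w. \<lambda>i\<in>I. X i w) -` S \<inter> space M =
      {w \<in> space M. X j w \<in> A1 \<and> X k w \<in> A2 \<and> is_record X j w \<and> is_record X k w}"
  proof -
    have sub1: "{1..<j} \<subseteq> I" "{1..<k} \<subseteq> I" unfolding I_def using jk by auto
    show ?thesis
      unfolding S_def is_record_def using jk jI kI sub1 measurable_space[OF Vm]
      by (auto simp: subset_eq)
  qed
  finally have calc: "emeasure (PiM I (\<lambda>_. distr M borel (X 1))) S = emeasure M {w \<in> space M. X j w \<in> A1 \<and> X k w \<in> A2 \<and> is_record X j w \<and> is_record X k w}" .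
  show ?thesis unfolding I_def[symmetric] sp S_def[symmetric] using calc by simp
qed


context cdist
begin

lemma Fpow_nn: "0 \<le> F x ^ n" using F_01 by simp

lemma inner_less:
  "(\<integral>\<^sup>+ u. indicator {..<v} u * ennreal (F u ^ p) * c \<partial>\<mu>) = ennreal (F v ^ Suc p / Suc p) * c"
proof -
  have "(\<integral>\<^sup>+ u. indicator {..<v} u * ennreal (F u ^ p) * c \<partial>\<mu>) =
        (\<integral>\<^sup>+ u. indicator {..<v} u * ennreal (F u ^ p) \<partial>\<mu>) * c"
    by (rule nn_integral_multc) measurable
  then show ?thesis using L_less by simp
qed

lemma inner_le:
  "(\<integral>\<^sup>+ u. indicator {..v} u * ennreal (F u ^ p) * c \<partial>\<mu>) = ennreal (F v ^ Suc p / Suc p) * c"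
proof -
  have "(\<integral>\<^sup>+ u. indicator {..v} u * ennreal (F u ^ p) * c \<partial>\<mu>) =
        (\<integral>\<^sup>+ u. indicator {..v} u * ennreal (F u ^ p) \<partial>\<mu>) * c"
    by (rule nn_integral_multc) measurable
  then show ?thesis using L_le by simp
qed

lemma inner_all:
  "(\<integral>\<^sup>+ u. ennreal (F u ^ p) * c \<partial>\<mu>) = ennreal (1 / Suc p) * c"
proof -
  have "(\<integral>\<^sup>+ u. ennreal (F u ^ p) * c \<partial>\<mu>) = (\<integral>\<^sup>+ u. ennreal (F u ^ p) \<partial>\<mu>) * c"
    by (rule nn_integral_multc) measurable
  then show ?thesis using L_all by simp
qed

lemma L_Ioc:
  assumes "a < b"
  shows "(\<integral>\<^sup>+ u. indicator {a<..b} u * ennreal (F u ^ q) \<partial>\<mu>) = ennreal ((F b ^ Suc q - F a ^ Suc q) / Suc q)"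
proof -
  have "(\<integral>\<^sup>+ u. indicator {..b} u * ennreal (F u ^ q) \<partial>\<mu>) =
     (\<integral>\<^sup>+ u. indicator {..a} u * ennreal (F u ^ q) + indicator {a<..b} u * ennreal (F u ^ q) \<partial>\<mu>)"
    using assms by (intro nn_integral_cong) (auto split: split_indicator)
  also have "\<dots> = (\<integral>\<^sup>+ u. indicator {..a} u * ennreal (F u ^ q) \<partial>\<mu>) + (\<integral>\<^sup>+ u. indicator {a<..b} u * ennreal (F u ^ q) \<partial>\<mu>)"
    by (rule nn_integral_add) measurable
  finally have eq: "ennreal (F b ^ Suc q / Suc q) = ennreal (F a ^ Suc q / Suc q) + (\<integral>\<^sup>+ u. indicator {a<..b} u * ennreal (F u ^ q) \<partial>\<mu>)"
    unfolding L_le .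
  have le: "F a ^ Suc q \<le> F b ^ Suc q"
    using assms F_mono[of a b] F_01 by (intro power_mono) auto
  have "(\<integral>\<^sup>+ u. indicator {a<..b} u * ennreal (F u ^ q) \<partial>\<mu>) = ennreal (F b ^ Suc q / Suc q) - ennreal (F a ^ Suc q / Suc q)"
    unfolding eq by simp
  also have "\<dots> = ennreal (F b ^ Suc q / Suc q - F a ^ Suc q / Suc q)"
    using F_01 by (subst ennreal_minus) (auto intro: divide_nonneg_nonneg)
  also have "F b ^ Suc q / Suc q - F a ^ Suc q / Suc q = (F b ^ Suc q - F a ^ Suc q) / Suc q"
    by (simp add: diff_divide_distrib)
  finally show ?thesis .
qed

end


context cdist
begin

lemma emul: "0 \<le> x \<Longrightarrow> 0 \<le> y \<Longrightarrow> ennreal x * ennreal y = ennreal (x * y)"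
  by (simp add: ennreal_mult)

lemma J_UU:
  "(\<integral>\<^sup>+ v. \<integral>\<^sup>+ u. indicator UNIV u * indicator UNIV v * indicator {..<v} u *
          ennreal (F u ^ p) * ennreal (F v ^ q) \<partial>\<mu> \<partial>\<mu>)
   = ennreal (1 / Suc (Suc p + q)) * ennreal (1 / Suc p)"
proof -
  have "(\<integral>\<^sup>+ v. \<integral>\<^sup>+ u. indicator UNIV u * indicator UNIV v * indicator {..<v} u *
          ennreal (F u ^ p) * ennreal (F v ^ q) \<partial>\<mu> \<partial>\<mu>) =
        (\<integral>\<^sup>+ v. ennreal (F v ^ (Suc p + q)) * ennreal (1 / Suc p) \<partial>\<mu>)"
  proof (intro nn_integral_cong)
    fix v
    have "(\<integral>\<^sup>+ u. indicator UNIV u * indicator UNIV v * indicator {..<v} u *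
          ennreal (F u ^ p) * ennreal (F v ^ q) \<partial>\<mu>) = (\<integral>\<^sup>+ u. indicator {..<v} u *
          ennreal (F u ^ p) * ennreal (F v ^ q) \<partial>\<mu>)" by simp
    also have "\<dots> = ennreal (F v ^ Suc p / Suc p) * ennreal (F v ^ q)" by (rule inner_less)
    also have "\<dots> = ennreal (F v ^ (Suc p + q)) * ennreal (1 / Suc p)"
      using F_01[of v] by (simp add: emul power_add field_simps)
    finally show "(\<integral>\<^sup>+ u. indicator UNIV u * indicator UNIV v * indicator {..<v} u *
          ennreal (F u ^ p) * ennreal (F v ^ q) \<partial>\<mu>) = ennreal (F v ^ (Suc p + q)) * ennreal (1 / Suc p)" .
  qed
  also have "\<dots> = ennreal (1 / Suc (Suc p + q)) * ennreal (1 / Suc p)" by (rule inner_all)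
  finally show ?thesis .
qed

lemma J_U2:
  "(\<integral>\<^sup>+ v. \<integral>\<^sup>+ u. indicator UNIV u * indicator {..y} v * indicator {..<v} u *
          ennreal (F u ^ p) * ennreal (F v ^ q) \<partial>\<mu> \<partial>\<mu>)
   = ennreal (F y ^ Suc (Suc p + q) / Suc (Suc p + q)) * ennreal (1 / Suc p)"
proof -
  have "(\<integral>\<^sup>+ v. \<integral>\<^sup>+ u. indicator UNIV u * indicator {..y} v * indicator {..<v} u *
          ennreal (F u ^ p) * ennreal (F v ^ q) \<partial>\<mu> \<partial>\<mu>) =
        (\<integral>\<^sup>+ v. indicator {..y} v * ennreal (F v ^ (Suc p + q)) * ennreal (1 / Suc p) \<partial>\<mu>)"
  proof (intro nn_integral_cong)
    fix v
    have "(\<integral>\<^sup>+ u. indicator UNIV u * indicator {..y} v * indicator {..<v} u *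
          ennreal (F u ^ p) * ennreal (F v ^ q) \<partial>\<mu>) = (\<integral>\<^sup>+ u. indicator {..<v} u *
          ennreal (F u ^ p) * (indicator {..y} v * ennreal (F v ^ q)) \<partial>\<mu>)"
      by (intro nn_integral_cong) (simp add: ac_simps)
    also have "\<dots> = ennreal (F v ^ Suc p / Suc p) * (indicator {..y} v * ennreal (F v ^ q))" by (rule inner_less)
    also have "\<dots> = indicator {..y} v * ennreal (F v ^ (Suc p + q)) * ennreal (1 / Suc p)"
      using F_01[of v] by (auto simp: emul power_add field_simps split: split_indicator)
    finally show "(\<integral>\<^sup>+ u. indicator UNIV u * indicator {..y} v * indicator {..<v} u *
          ennreal (F u ^ p) * ennreal (F v ^ q) \<partial>\<mu>) = indicator {..y} v * ennreal (F v ^ (Suc p + q)) * ennreal (1 / Suc p)" .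
  qed
  also have "\<dots> = ennreal (F y ^ Suc (Suc p + q) / Suc (Suc p + q)) * ennreal (1 / Suc p)" by (rule inner_le)
  finally show ?thesis .
qed

lemma J_num:
  "(\<integral>\<^sup>+ v. \<integral>\<^sup>+ u. indicator {..y1} u * indicator {..y2} v * indicator {..<v} u *
          ennreal (F u ^ p) * ennreal (F v ^ q) \<partial>\<mu> \<partial>\<mu>)
   = ennreal (F (min y1 y2) ^ Suc (Suc p + q) / Suc (Suc p + q)) * ennreal (1 / Suc p)
     + (if y1 < y2 then ennreal ((F y2 ^ Suc q - F y1 ^ Suc q) / Suc q) * ennreal (F y1 ^ Suc p / Suc p) else 0)"
proof -
  have "(\<integral>\<^sup>+ v. \<integral>\<^sup>+ u. indicator {..y1} u * indicator {..y2} v * indicator {..<v} u *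
          ennreal (F u ^ p) * ennreal (F v ^ q) \<partial>\<mu> \<partial>\<mu>) =
        (\<integral>\<^sup>+ v. indicator {..min y1 y2} v * ennreal (F v ^ (Suc p + q)) * ennreal (1 / Suc p)
           + indicator {y1<..y2} v * ennreal (F v ^ q) * ennreal (F y1 ^ Suc p / Suc p) \<partial>\<mu>)"
  proof (intro nn_integral_cong)
    fix v
    show "(\<integral>\<^sup>+ u. indicator {..y1} u * indicator {..y2} v * indicator {..<v} u *
          ennreal (F u ^ p) * ennreal (F v ^ q) \<partial>\<mu>) =
        indicator {..min y1 y2} v * ennreal (F v ^ (Suc p + q)) * ennreal (1 / Suc p)
           + indicator {y1<..y2} v * ennreal (F v ^ q) * ennreal (F y1 ^ Suc p / Suc p)"
    proof (cases "v \<le> y1")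
      case True
      have "(\<integral>\<^sup>+ u. indicator {..y1} u * indicator {..y2} v * indicator {..<v} u *
          ennreal (F u ^ p) * ennreal (F v ^ q) \<partial>\<mu>) = (\<integral>\<^sup>+ u. indicator {..<v} u *
          ennreal (F u ^ p) * (indicator {..y2} v * ennreal (F v ^ q)) \<partial>\<mu>)"
        using True by (intro nn_integral_cong) (auto split: split_indicator)
      also have "\<dots> = ennreal (F v ^ Suc p / Suc p) * (indicator {..y2} v * ennreal (F v ^ q))" by (rule inner_less)
      also have "\<dots> = indicator {..min y1 y2} v * ennreal (F v ^ (Suc p + q)) * ennreal (1 / Suc p)
           + indicator {y1<..y2} v * ennreal (F v ^ q) * ennreal (F y1 ^ Suc p / Suc p)"
        using F_01[of v] True by (auto simp: emul power_add field_simps split: split_indicator)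
      finally show ?thesis .
    next
      case False
      have "(\<integral>\<^sup>+ u. indicator {..y1} u * indicator {..y2} v * indicator {..<v} u *
          ennreal (F u ^ p) * ennreal (F v ^ q) \<partial>\<mu>) = (\<integral>\<^sup>+ u. indicator {..y1} u *
          ennreal (F u ^ p) * (indicator {..y2} v * ennreal (F v ^ q)) \<partial>\<mu>)"
        using False by (intro nn_integral_cong) (auto split: split_indicator)
      also have "\<dots> = ennreal (F y1 ^ Suc p / Suc p) * (indicator {..y2} v * ennreal (F v ^ q))" by (rule inner_le)
      also have "\<dots> = indicator {..min y1 y2} v * ennreal (F v ^ (Suc p + q)) * ennreal (1 / Suc p)
           + indicator {y1<..y2} v * ennreal (F v ^ q) * ennreal (F y1 ^ Suc p / Suc p)"
        using False by (auto simp: mult_ac split: split_indicator)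
      finally show ?thesis .
    qed
  qed
  also have "\<dots> = (\<integral>\<^sup>+ v. indicator {..min y1 y2} v * ennreal (F v ^ (Suc p + q)) * ennreal (1 / Suc p) \<partial>\<mu>)
       + (\<integral>\<^sup>+ v. indicator {y1<..y2} v * ennreal (F v ^ q) * ennreal (F y1 ^ Suc p / Suc p) \<partial>\<mu>)"
    by (rule nn_integral_add) measurable
  also have "(\<integral>\<^sup>+ v. indicator {..min y1 y2} v * ennreal (F v ^ (Suc p + q)) * ennreal (1 / Suc p) \<partial>\<mu>)
     = ennreal (F (min y1 y2) ^ Suc (Suc p + q) / Suc (Suc p + q)) * ennreal (1 / Suc p)"
    by (rule inner_le)
  also have "(\<integral>\<^sup>+ v. indicator {y1<..y2} v * ennreal (F v ^ q) * ennreal (F y1 ^ Suc p / Suc p) \<partial>\<mu>)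
     = (if y1 < y2 then ennreal ((F y2 ^ Suc q - F y1 ^ Suc q) / Suc q) * ennreal (F y1 ^ Suc p / Suc p) else 0)"
  proof (cases "y1 < y2")
    case True
    have "(\<integral>\<^sup>+ v. indicator {y1<..y2} v * ennreal (F v ^ q) * ennreal (F y1 ^ Suc p / Suc p) \<partial>\<mu>)
      = (\<integral>\<^sup>+ v. indicator {y1<..y2} v * ennreal (F v ^ q) \<partial>\<mu>) * ennreal (F y1 ^ Suc p / Suc p)"
      by (rule nn_integral_multc) measurable
    then show ?thesis using True L_Ioc[OF True] by simp
  next
    case False
    then have "{y1<..y2} = {}" by auto
    then show ?thesis using False by simp
  qed
  finally show ?thesis .
qed

end


theorem corollary3:
  fixes M :: "'a measure" and X :: "nat \<Rightarrow> 'a \<Rightarrow> real" and F :: "real \<Rightarrow> real"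
    and j k :: nat and y1 y2 :: real
  assumes "prob_space M"
    and "\<And>i. i \<ge> 1 \<Longrightarrow> X i \<in> borel_measurable M"
    and "prob_space.indep_vars M (\<lambda>_. borel) X {1..}"
    and "\<And>i. i \<ge> 1 \<Longrightarrow> distr M borel (X i) = distr M borel (X 1)"
    and F_def: "F = cdf (distr M borel (X 1))"
    and "continuous_on UNIV F"
    and "1 \<le> j" and "j < k"
  shows "(F y1 < F y2 \<longrightarrow>
           \<P>(w in M. X j w \<le> y1 \<and> X k w \<le> y2 \<bar> is_record X j w \<and> is_record X k w)
             = F y1 ^ j / real (k - j) * (real k * F y2 ^ (k - j) - real j * F y1 ^ (k - j)))
       \<and> (F y2 \<le> F y1 \<longrightarrow>
           \<P>(w in M. X j w \<le> y1 \<and> X k w \<le> y2 \<bar> is_record X j w \<and> is_record X k w)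
             = F y2 ^ k
           \<and> F y2 ^ k = \<P>(w in M. X k w \<le> y2 \<bar> is_record X k w))"
proof -
  note PS = assms(1) and meas = assms(2) and ind = assms(3) and dst = assms(4)
  note jk = assms(7,8)
  interpret P: prob_space M by fact
  define \<mu> where "\<mu> = distr M borel (X 1)"
  have rd: "real_distribution \<mu>" unfolding \<mu>_def using meas[of 1] by (intro P.real_distribution_distr) auto
  have Fc: "F = cdf \<mu>" unfolding \<mu>_def F_def ..
  have contF: "continuous_on UNIV (cdf \<mu>)" using assms(6) unfolding Fc .
  interpret C: cdist \<mu> using rd contF by (rule cdist.intro)
  have key: "emeasure M {w \<in> space M. X j' w \<in> A1 \<and> X k w \<in> A2 \<and> is_record X j' w \<and> is_record X k w}
     = (\<integral>\<^sup>+ v. \<integral>\<^sup>+ u. indicator A1 u * indicator A2 v * indicator {..<v} u *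
          ennreal (F u ^ (j' - 1)) * ennreal (F v ^ (k - j' - 1)) \<partial>\<mu> \<partial>\<mu>)"
    if "1 \<le> j'" "j' < k" "A1 \<in> sets borel" "A2 \<in> sets borel" for j' A1 A2
    using red_M[OF PS meas ind dst that] C.pi_red[OF that] unfolding \<mu>_def[symmetric] Fc by simp
  define p where "p = j - 1"
  define q where "q = k - j - 1"
  have pj: "Suc p = j" and pqk: "Suc (Suc p + q) = k" and qk: "Suc q = k - j" and jqk: "Suc (j + q) = k"
    unfolding p_def q_def using jk by auto
  define a where "a = F y1"
  define b where "b = F y2"
  have ab01: "0 \<le> a" "a \<le> 1" "0 \<le> b" "b \<le> 1" unfolding a_def b_def Fc using C.F_01 by auto
  have Fmono: "x \<le> y \<Longrightarrow> F x \<le> F y" for x y unfolding Fc by (rule C.F_mono)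
  define m1 where "m1 = F (min y1 y2) ^ k / k * (1 / j) +
     (if y1 < y2 then (b ^ (k - j) - a ^ (k - j)) / (k - j) * (a ^ j / j) else 0)"
  have m1: "measure M {w \<in> space M. X j w \<in> {..y1} \<and> X k w \<in> {..y2} \<and> is_record X j w \<and> is_record X k w} = m1"
  proof -
    have nn1: "0 \<le> F (min y1 y2) ^ k / k * (1 / j)" unfolding Fc using C.F_01 by simp
    have nn2: "0 \<le> (b ^ (k - j) - a ^ (k - j)) / (k - j) * (a ^ j / j)" if "y1 < y2"
    proof -
      have "a \<le> b" unfolding a_def b_def using Fmono that by simp
      then have "a ^ (k - j) \<le> b ^ (k - j)" using ab01 by (intro power_mono) auto
      then show ?thesis using ab01 by simp
    qed
    have "emeasure M {w \<in> space M. X j w \<in> {..y1} \<and> X k w \<in> {..y2} \<and> is_record X j w \<and> is_record X k w}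
      = ennreal (F (min y1 y2) ^ k / k) * ennreal (1 / j) +
        (if y1 < y2 then ennreal ((b ^ (k - j) - a ^ (k - j)) / (k - j)) * ennreal (a ^ j / j) else 0)"
    proof -
      have e1: "emeasure M {w \<in> space M. X j w \<in> {..y1} \<and> X k w \<in> {..y2} \<and> is_record X j w \<and> is_record X k w} =
        (\<integral>\<^sup>+ v. \<integral>\<^sup>+ u. indicator {..y1} u * indicator {..y2} v * indicator {..<v} u *
          ennreal (F u ^ p) * ennreal (F v ^ q) \<partial>\<mu> \<partial>\<mu>)"
        using key[OF jk, of "{..y1}" "{..y2}"] unfolding p_def[symmetric] q_def[symmetric] by simp
      note e2 = C.J_num[of y1 y2 p q, unfolded pqk pj qk jqk]
      show ?thesis unfolding a_def b_def using e1 e2 unfolding Fc by (simp only:)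
    qed
    also have "\<dots> = ennreal m1"
    proof -
      have f0: "0 \<le> F (min y1 y2) ^ k / k" "0 \<le> 1 / real j" unfolding Fc using C.F_01 by simp_all
      have A: "ennreal (F (min y1 y2) ^ k / k) * ennreal (1 / j) = ennreal (F (min y1 y2) ^ k / k * (1 / j))"
        using f0 by (rule C.emul)
      show ?thesis
      proof (cases "y1 < y2")
        case True
        have "a \<le> b" unfolding a_def b_def using Fmono True by simp
        then have g0: "0 \<le> (b ^ (k - j) - a ^ (k - j)) / (k - j)" "0 \<le> a ^ j / j"
          using ab01 power_mono[of a b "k - j"] by simp_all
        have B: "ennreal ((b ^ (k - j) - a ^ (k - j)) / (k - j)) * ennreal (a ^ j / j) =
          ennreal ((b ^ (k - j) - a ^ (k - j)) / (k - j) * (a ^ j / j))"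
          using g0 by (rule C.emul)
        show ?thesis unfolding A B m1_def using True nn1 nn2[OF True] by (simp add: ennreal_plus)
      next
        case False
        then show ?thesis unfolding A m1_def by simp
      qed
    qed
    finally have "emeasure M {w \<in> space M. X j w \<in> {..y1} \<and> X k w \<in> {..y2} \<and> is_record X j w \<and> is_record X k w} = ennreal m1" .
    moreover have "0 \<le> m1" unfolding m1_def using nn1 nn2 by simp
    ultimately show ?thesis unfolding measure_def by simp
  qed
  define m2 where "m2 = 1 / real k * (1 / real j)"
  have m2: "measure M {w \<in> space M. X j w \<in> UNIV \<and> X k w \<in> UNIV \<and> is_record X j w \<and> is_record X k w} = m2"
  proof -
    have "emeasure M {w \<in> space M. X j w \<in> UNIV \<and> X k w \<in> UNIV \<and> is_record X j w \<and> is_record X k w}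
      = ennreal (1 / k) * ennreal (1 / j)"
    proof -
      have e1: "emeasure M {w \<in> space M. X j w \<in> UNIV \<and> X k w \<in> UNIV \<and> is_record X j w \<and> is_record X k w} =
        (\<integral>\<^sup>+ v. \<integral>\<^sup>+ u. indicator UNIV u * indicator UNIV v * indicator {..<v} u *
          ennreal (F u ^ p) * ennreal (F v ^ q) \<partial>\<mu> \<partial>\<mu>)"
        using key[OF jk, of UNIV UNIV] unfolding p_def[symmetric] q_def[symmetric] by simp
      note e2 = C.J_UU[of p q, unfolded pqk pj jqk]
      show ?thesis using e1 e2 unfolding Fc by (simp only:)
    qed
    also have "\<dots> = ennreal m2" unfolding m2_def by (simp add: ennreal_mult[symmetric])
    finally show ?thesis unfolding measure_def m2_def by simp
  qed
  have k1: "1 \<le> (1::nat)" "1 < k" using jk by auto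
  define m3 where "m3 = b ^ k / k"
  have m3: "measure M {w \<in> space M. X 1 w \<in> UNIV \<and> X k w \<in> {..y2} \<and> is_record X 1 w \<and> is_record X k w} = m3"
  proof -
    have e: "Suc (Suc 0 + (k - 1 - 1)) = k" using jk by auto
    have "emeasure M {w \<in> space M. X 1 w \<in> UNIV \<and> X k w \<in> {..y2} \<and> is_record X 1 w \<and> is_record X k w}
      = ennreal (b ^ k / k) * ennreal (1 / 1)"
    proof -
      have e1: "emeasure M {w \<in> space M. X 1 w \<in> UNIV \<and> X k w \<in> {..y2} \<and> is_record X 1 w \<and> is_record X k w} =
        (\<integral>\<^sup>+ v. \<integral>\<^sup>+ u. indicator UNIV u * indicator {..y2} v * indicator {..<v} u *
          ennreal (F u ^ 0) * ennreal (F v ^ (k - 1 - 1)) \<partial>\<mu> \<partial>\<mu>)"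
        using key[OF k1, of UNIV "{..y2}"] by simp
      note e2 = C.J_U2[where p=0 and q="k - 1 - 1" and y=y2, unfolded e]
      show ?thesis unfolding b_def using e1 e2 unfolding Fc by (simp only: One_nat_def) simp
    qed
    then show ?thesis unfolding measure_def m3_def using ab01 by simp
  qed
  define m4 where "m4 = 1 / real k"
  have m4: "measure M {w \<in> space M. X 1 w \<in> UNIV \<and> X k w \<in> UNIV \<and> is_record X 1 w \<and> is_record X k w} = m4"
  proof -
    have e: "Suc (Suc 0 + (k - 1 - 1)) = k" using jk by auto
    have "emeasure M {w \<in> space M. X 1 w \<in> UNIV \<and> X k w \<in> UNIV \<and> is_record X 1 w \<and> is_record X k w}
      = ennreal (1 / k) * ennreal (1 / 1)"
    proof -
      have e1: "emeasure M {w \<in> space M. X 1 w \<in> UNIV \<and> X k w \<in> UNIV \<and> is_record X 1 w \<and> is_record X k w} =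
        (\<integral>\<^sup>+ v. \<integral>\<^sup>+ u. indicator UNIV u * indicator UNIV v * indicator {..<v} u *
          ennreal (F u ^ 0) * ennreal (F v ^ (k - 1 - 1)) \<partial>\<mu> \<partial>\<mu>)"
        using key[OF k1, of UNIV UNIV] by simp
      note e2 = C.J_UU[of 0 "k - 1 - 1", unfolded e]
      show ?thesis using e1 e2 unfolding Fc by (simp only: One_nat_def) simp
    qed
    then show ?thesis unfolding measure_def m4_def by simp
  qed
  have rec1: "is_record X 1 w" for w unfolding is_record_def by simp
  have cp1: "\<P>(w in M. X j w \<le> y1 \<and> X k w \<le> y2 \<bar> is_record X j w \<and> is_record X k w) = m1 / m2"
  proof -
    have "{w \<in> space M. (X j w \<le> y1 \<and> X k w \<le> y2) \<and> is_record X j w \<and> is_record X k w} =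
          {w \<in> space M. X j w \<in> {..y1} \<and> X k w \<in> {..y2} \<and> is_record X j w \<and> is_record X k w}" by auto
    moreover have "{w \<in> space M. is_record X j w \<and> is_record X k w} =
          {w \<in> space M. X j w \<in> UNIV \<and> X k w \<in> UNIV \<and> is_record X j w \<and> is_record X k w}" by auto
    ultimately show ?thesis unfolding cond_prob_def using m1 m2 by simp
  qed
  have cp3: "\<P>(w in M. X k w \<le> y2 \<bar> is_record X k w) = m3 / m4"
  proof -
    have "{w \<in> space M. X k w \<le> y2 \<and> is_record X k w} =
          {w \<in> space M. X 1 w \<in> UNIV \<and> X k w \<in> {..y2} \<and> is_record X 1 w \<and> is_record X k w}"
      using rec1 by auto
    moreover have "{w \<in> space M. is_record X k w} =
          {w \<in> space M. X 1 w \<in> UNIV \<and> X k w \<in> UNIV \<and> is_record X 1 w \<and> is_record X k w}"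
      using rec1 by auto
    ultimately show ?thesis unfolding cond_prob_def using m3 m4 by simp
  qed
  have kpos: "0 < k" "0 < j" "j < k" using jk by auto
  have m34: "m3 / m4 = b ^ k" unfolding m3_def m4_def using kpos by simp
  have powk: "x ^ k = x ^ j * x ^ (k - j)" for x :: real
    using jk by (simp add: power_add[symmetric])
  show ?thesis
  proof (intro conjI impI)
    assume lt: "F y1 < F y2"
    then have y12: "y1 < y2" using Fmono by (meson not_le)
    then have "min y1 y2 = y1" by simp
    then have m1e: "m1 = a ^ k / k * (1 / j) + (b ^ (k - j) - a ^ (k - j)) / (k - j) * (a ^ j / j)"
      unfolding m1_def a_def using y12 by simp
    have kj0: "real (k - j) > 0" using kpos by simp
    have "m1 / m2 = a ^ j / real (k - j) * (real k * b ^ (k - j) - real j * a ^ (k - j))"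
      unfolding m1e m2_def powk[of a] using kpos kj0 by (simp add: field_simps of_nat_diff)
    then show "\<P>(w in M. X j w \<le> y1 \<and> X k w \<le> y2 \<bar> is_record X j w \<and> is_record X k w)
             = F y1 ^ j / real (k - j) * (real k * F y2 ^ (k - j) - real j * F y1 ^ (k - j))"
      using cp1 unfolding a_def b_def by simp
  next
    assume le: "F y2 \<le> F y1"
    have "m1 = b ^ k / k * (1 / j)"
    proof (cases "y1 < y2")
      case True
      then have "a = b" using le Fmono[of y1 y2] unfolding a_def b_def by simp
      then show ?thesis unfolding m1_def using True by (simp add: a_def b_def)
    next
      case False
      then show ?thesis unfolding m1_def b_def by (simp add: min_def)
    qed
    then have "m1 / m2 = b ^ k" unfolding m2_def using kpos by simp
    then show "\<P>(w in M. X j w \<le> y1 \<and> X k w \<le> y2 \<bar> is_record X j w \<and> is_record X k w) = F y2 ^ k"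
      using cp1 unfolding b_def by simp
    show "F y2 ^ k = \<P>(w in M. X k w \<le> y2 \<bar> is_record X k w)"
      using cp3 m34 unfolding b_def by simp
  qed
qed

end
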